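(* Let $p \geq 2$. Consider parameter tuples $(\pi, \alpha, u_1, \dots, u_p, h)$ where $\pi \in (0,1)$, $\alpha \in \mathbb{R}$, $h$ is a probability density on $\mathbb{R}^p$, and $u_j$ are real functions, such that the following hold. The density $h$ and the density \[ g(\mathbf{x}) = \exp\Big\{\alpha + \sum_{j=1}^p u_j(x_j)\Big\} h(\mathbf{x}) \] share a common compact support $\mathcal{T} = \mathcal{T}_1 \times \cdots \times \mathcal{T}_p$, where $\mathcal{T}_j$ is the support of $u_j$ for $j = 1, \dots, p$. Each $u_j$ satisfies the centering constraint $\int u_j(x_j)\, dx_j = 0$. The normalization $\int \exp\{\alpha + \sum_{j=1}^p u_j(x_j)\} h(\mathbf{x})\, d\mathbf{x} = 1$ holds. Finally, there exist two distinct indices $j, k \in \{1,\dots,p\}$ such that $u_j$ and $u_k$ are both non-constant on their respective supports. Such a tuple generates the labeled-sample density $g$ and the unlabeled-sample density $f = \pi g + (1-\pi) h$. Then the model uniquely determines $(\pi, \alpha, u_1, \dots, u_p)$. That is, if two such tuples generate the same pair $(g, f)$, then they have the same values of $\pi$, $\alpha$, $u_1, \dots, u_p$.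
   Context: Positive-unlabeled (PU) data under the "selected completely at random" assumption. The labeled sample $\mathbf{x}_1, \dots, \mathbf{x}_{n_0}$ is drawn from the positive-class density $g(\mathbf{x})$. The unlabeled sample $\mathbf{x}_{n_0+1}, \dots, \mathbf{x}_n$ is drawn from the mixture $\pi g(\mathbf{x}) + (1-\pi) h(\mathbf{x})$, where $h$ is the negative-class density and $\pi \in (0,1)$ is the mixture proportion. The generalized additive exponential tilting (GAET) model assumes \[ \log\{g(\mathbf{x})/h(\mathbf{x})\} = \alpha + \sum_{j=1}^p u_j(x_j), \] where $x_j$ is the $j$-th coordinate of $\mathbf{x} \in \mathbb{R}^p$. Each $u_j$ is an unspecified function satisfying $\int u_j(x_j)\, dx_j = 0$. The constant $\alpha$ ensures $\int \exp\{\alpha + \sum_j u_j(x_j)\} h(\mathbf{x})\, d\mathbf{x} = 1$. *)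

theory Defs
  imports "HOL-Analysis.Analysis"
begin

text \<open>Points of R^p are vectors of type real^'n with CARD('n) = p.
  The additive components are u :: 'n => real => real (u j is the j-th function).\<close>

definition gaet_g :: "real \<Rightarrow> ('n::finite \<Rightarrow> real \<Rightarrow> real) \<Rightarrow> (real^'n \<Rightarrow> real) \<Rightarrow> real^'n \<Rightarrow> real" where
  "gaet_g \<alpha> u h x = exp (\<alpha> + (\<Sum>j\<in>UNIV. u j (x $ j))) * h x"

definition gaet_f :: "real \<Rightarrow> real \<Rightarrow> ('n::finite \<Rightarrow> real \<Rightarrow> real) \<Rightarrow> (real^'n \<Rightarrow> real) \<Rightarrow> real^'n \<Rightarrow> real" where
  "gaet_f \<pi> \<alpha> u h x = \<pi> * gaet_g \<alpha> u h x + (1 - \<pi>) * h x"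

definition fsupp :: "(real \<Rightarrow> real) \<Rightarrow> real set" where
  "fsupp v = closure {t. v t \<noteq> 0}"

definition gaet_admissible :: "real \<Rightarrow> real \<Rightarrow> ('n::finite \<Rightarrow> real \<Rightarrow> real) \<Rightarrow> (real^'n \<Rightarrow> real) \<Rightarrow> bool" where
  "gaet_admissible \<pi> \<alpha> u h \<longleftrightarrow>
     0 < \<pi> \<and> \<pi> < 1 \<and>
     h \<in> borel_measurable lborel \<and> (\<forall>x. 0 \<le> h x) \<and> (\<integral>\<^sup>+ x. ennreal (h x) \<partial>lborel) = 1 \<and>
     (let T = {x :: real^'n. \<forall>j. x $ j \<in> fsupp (u j)} in
        compact T \<and> {x. 0 < h x} = T \<and> {x. 0 < gaet_g \<alpha> u h x} = T) \<and>
     (\<forall>j. integrable lborel (u j) \<and> (\<integral>t. u j t \<partial>lborel) = 0) \<and>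
     (\<integral>\<^sup>+ x. ennreal (exp (\<alpha> + (\<Sum>j\<in>UNIV. u j (x $ j))) * h x) \<partial>lborel) = 1 \<and>
     (\<exists>j k. j \<noteq> k \<and>
        (\<exists>a\<in>fsupp (u j). \<exists>b\<in>fsupp (u j). u j a \<noteq> u j b) \<and>
        (\<exists>a\<in>fsupp (u k). \<exists>b\<in>fsupp (u k). u k a \<noteq> u k b))"

end

theory Submission
  imports Defs
begin

lemma null_coord:
  fixes S :: "real set" and j :: "'n::finite"
  assumes Sb: "S \<in> sets borel" and S0: "emeasure lborel S = 0"
  shows "emeasure lborel {x::real^'n. x$j \<in> S} = 0"
proof -
  define f where "f b = (if b = axis j (1::real) then indicator S else (\<lambda>_::real. 1::ennreal))" for b :: "real^'n"
  have ax: "axis j (1::real) \<in> (Basis :: (real^'n) set)" by (simp add: axis_in_Basis_iff)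
  have meas: "\<And>b. f b \<in> borel_measurable borel" using Sb by (auto simp: f_def)
  have eq: "(\<Prod>b\<in>Basis. f b (x \<bullet> b)) = indicator {x::real^'n. x$j \<in> S} x" for x :: "real^'n"
  proof -
    have "(\<Prod>b\<in>Basis. f b (x \<bullet> b)) = f (axis j 1) (x \<bullet> axis j 1) * (\<Prod>b\<in>Basis-{axis j 1}. f b (x \<bullet> b))"
      using ax by (rule prod.remove[OF finite_Basis])
    also have "(\<Prod>b\<in>Basis-{axis j 1}. f b (x \<bullet> b)) = 1" by (rule prod.neutral) (auto simp: f_def)
    finally show ?thesis by (simp add: f_def cart_eq_inner_axis[symmetric] indicator_def)
  qed
  have mv: "(\<lambda>x::real^'n. x$j) \<in> borel_measurable lborel" by simp
  have "(\<lambda>x::real^'n. x$j) -` S \<inter> space lborel \<in> sets lborel" by (rule measurable_sets[OF mv Sb])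
  then have ms: "{x::real^'n. x$j \<in> S} \<in> sets lborel" by (simp add: vimage_def)
  have "emeasure lborel {x::real^'n. x$j \<in> S} = (\<integral>\<^sup>+x. indicator {x::real^'n. x$j \<in> S} x \<partial>lborel)"
    using ms by simp
  also have "\<dots> = (\<integral>\<^sup>+x. (\<Prod>b\<in>Basis. f b (x \<bullet> b)) \<partial>lborel)" by (simp add: eq)
  also have "\<dots> = (\<Prod>b\<in>Basis. (\<integral>\<^sup>+x. f b x \<partial>lborel))"
    by (rule nn_integral_lborel_prod) (use meas in auto)
  also have "\<dots> = 0"
  proof (rule prod_zero)
    show "finite (Basis :: (real^'n) set)" by simp
    show "\<exists>b\<in>Basis. (\<integral>\<^sup>+x. f b x \<partial>lborel) = 0"
      using ax Sb S0 by (intro bexI[of _ "axis j 1"]) (auto simp: f_def)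
  qed
  finally show ?thesis .
qed

lemma sum_upd1:
  fixes x0 :: "real^'n::finite" and \<phi> :: "'n \<Rightarrow> real \<Rightarrow> real"
  shows "(\<Sum>i\<in>UNIV. \<phi> i ((\<chi> i. if i = j then s else x0$i) $ i)) = \<phi> j s + (\<Sum>i\<in>UNIV-{j}. \<phi> i (x0$i))"
proof -
  have "(\<Sum>i\<in>UNIV. \<phi> i ((\<chi> i. if i = j then s else x0$i) $ i)) =
        \<phi> j s + (\<Sum>i\<in>UNIV-{j}. \<phi> i ((\<chi> i. if i = j then s else x0$i) $ i))"
    by (subst sum.remove[of UNIV j]) auto
  also have "(\<Sum>i\<in>UNIV-{j}. \<phi> i ((\<chi> i. if i = j then s else x0$i) $ i)) = (\<Sum>i\<in>UNIV-{j}. \<phi> i (x0$i))"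
    by (rule sum.cong) auto
  finally show ?thesis .
qed

lemma sum_upd2:
  fixes x0 :: "real^'n::finite" and \<phi> :: "'n \<Rightarrow> real \<Rightarrow> real"
  assumes "j \<noteq> k"
  shows "(\<Sum>i\<in>UNIV. \<phi> i ((\<chi> i. if i = j then s else if i = k then t else x0$i) $ i))
      = \<phi> j s + \<phi> k t + (\<Sum>i\<in>UNIV-{j,k}. \<phi> i (x0$i))"
proof -
  let ?y = "(\<chi> i. if i = j then s else if i = k then t else x0$i)"
  have "(\<Sum>i\<in>UNIV. \<phi> i (?y $ i)) = \<phi> j s + (\<Sum>i\<in>UNIV-{j}. \<phi> i (?y $ i))"
    by (subst sum.remove[of UNIV j]) auto
  also have "(\<Sum>i\<in>UNIV-{j}. \<phi> i (?y $ i)) = \<phi> k t + (\<Sum>i\<in>UNIV-{j}-{k}. \<phi> i (?y $ i))"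
    using assms by (subst sum.remove[of "UNIV-{j}" k]) auto
  also have "UNIV-{j}-{k} = UNIV-{j,k}" by auto
  also have "(\<Sum>i\<in>UNIV-{j,k}. \<phi> i (?y $ i)) = (\<Sum>i\<in>UNIV-{j,k}. \<phi> i (x0$i))"
    by (rule sum.cong) auto
  finally show ?thesis by simp
qed

lemma alg:
  fixes p p' A B C C' X1 X2 Y1 Y2 X1' X2' Y1' Y2' :: real
  assumes "p < 1" "C > 0" "X1 \<noteq> X2" "Y1 \<noteq> Y2"
    and e11: "p + (1-p)*(C*X1*Y1) = p' + (1-p')*(C'*X1'*Y1')"
    and e12: "p + (1-p)*(C*X1*Y2) = p' + (1-p')*(C'*X1'*Y2')"
    and e21: "p + (1-p)*(C*X2*Y1) = p' + (1-p')*(C'*X2'*Y1')"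
    and e22: "p + (1-p)*(C*X2*Y2) = p' + (1-p')*(C'*X2'*Y2')"
  shows "p = p'"
proof -
  have z: "((1-p')*(C'*X1'*Y1')) * ((1-p')*(C'*X2'*Y2')) = ((1-p')*(C'*X1'*Y2')) * ((1-p')*(C'*X2'*Y1'))"
    by (simp add: algebra_simps)
  have "(p - p' + (1-p)*(C*X1*Y1)) * (p - p' + (1-p)*(C*X2*Y2)) = (p - p' + (1-p)*(C*X1*Y2)) * (p - p' + (1-p)*(C*X2*Y1))"
  proof -
    have a: "p - p' + (1-p)*(C*X1*Y1) = (1-p')*(C'*X1'*Y1')" using e11 by linarith
    have b: "p - p' + (1-p)*(C*X2*Y2) = (1-p')*(C'*X2'*Y2')" using e22 by linarith
    have c: "p - p' + (1-p)*(C*X1*Y2) = (1-p')*(C'*X1'*Y2')" using e12 by linarith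
    have d: "p - p' + (1-p)*(C*X2*Y1) = (1-p')*(C'*X2'*Y1')" using e21 by linarith
    show ?thesis unfolding a b c d using z .
  qed
  then have "(p - p') * (1-p) * C * ((X1 - X2) * (Y1 - Y2)) = 0" by algebra
  moreover have "(1-p) \<noteq> 0" "C \<noteq> 0" "(X1 - X2) * (Y1 - Y2) \<noteq> 0" using assms by auto
  ultimately show ?thesis by simp
qed

theorem theorem1:
  fixes \<pi> \<alpha> \<pi>' \<alpha>' :: real
    and u u' :: "'n::finite \<Rightarrow> real \<Rightarrow> real"
    and h h' :: "real^'n \<Rightarrow> real"
  assumes "CARD('n) \<ge> 2"
    and "gaet_admissible \<pi> \<alpha> u h"
    and "gaet_admissible \<pi>' \<alpha>' u' h'"
    and "gaet_g \<alpha> u h = gaet_g \<alpha>' u' h'"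
    and "gaet_f \<pi> \<alpha> u h = gaet_f \<pi>' \<alpha>' u' h'"
  shows "\<pi> = \<pi>' \<and> \<alpha> = \<alpha>' \<and> (\<forall>j. u j = u' j)"
proof -
  define S where "S j = fsupp (u j)" for j
  define S' where "S' j = fsupp (u' j)" for j
  define T where "T = {x::real^'n. \<forall>j. x$j \<in> S j}"
  define T' where "T' = {x::real^'n. \<forall>j. x$j \<in> S' j}"
  have p1: "0 < \<pi>" "\<pi> < 1" using assms(2) unfolding gaet_admissible_def by auto
  have p1': "0 < \<pi>'" "\<pi>' < 1" using assms(3) unfolding gaet_admissible_def by auto
  have hnn: "\<And>x. 0 \<le> h x" using assms(2) unfolding gaet_admissible_def by auto
  have hint: "(\<integral>\<^sup>+ x. ennreal (h x) \<partial>lborel) = 1" using assms(2) unfolding gaet_admissible_def by auto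
  have hT: "{x. 0 < h x} = T" using assms(2) unfolding gaet_admissible_def Let_def T_def S_def by auto
  have gT: "{x. 0 < gaet_g \<alpha> u h x} = T" using assms(2) unfolding gaet_admissible_def Let_def T_def S_def by auto
  have hT': "{x. 0 < h' x} = T'" using assms(3) unfolding gaet_admissible_def Let_def T'_def S'_def by auto
  have gT': "{x. 0 < gaet_g \<alpha>' u' h' x} = T'" using assms(3) unfolding gaet_admissible_def Let_def T'_def S'_def by auto
  have ui: "\<And>j. integrable lborel (u j) \<and> (\<integral>t. u j t \<partial>lborel) = 0" using assms(2) unfolding gaet_admissible_def by auto
  have ui': "\<And>j. integrable lborel (u' j) \<and> (\<integral>t. u' j t \<partial>lborel) = 0" using assms(3) unfolding gaet_admissible_def by auto
  obtain j k where jk: "j \<noteq> k" and "\<exists>a\<in>fsupp (u j). \<exists>b\<in>fsupp (u j). u j a \<noteq> u j b"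
      and "\<exists>a\<in>fsupp (u k). \<exists>b\<in>fsupp (u k). u k a \<noteq> u k b"
    using assms(2) unfolding gaet_admissible_def by blast
  then obtain a b a' b' where ab: "a \<in> S j" "b \<in> S j" "u j a \<noteq> u j b"
      and ab': "a' \<in> S k" "b' \<in> S k" "u k a' \<noteq> u k b'" unfolding S_def by blast
  have TT: "T = T'" using gT gT' assms(4) by simp
  have "T \<noteq> {}"
  proof
    assume "T = {}"
    have "h x = 0" for x
    proof -
      have "x \<notin> {x. 0 < h x}" using hT \<open>T = {}\<close> by simp
      then show ?thesis using hnn[of x] by simp
    qed
    then show False using hint by simp
  qed
  then obtain x0 where x0: "x0 \<in> T" by blast
  have upd1: "(\<chi> i. if i = l then t else x0$i) \<in> T" if "t \<in> S l" for l t
    using x0 that unfolding T_def by auto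
  have upd2: "(\<chi> i. if i = j then s else if i = k then t else x0$i) \<in> T" if "s \<in> S j" "t \<in> S k" for s t
    using x0 that jk unfolding T_def by auto
  have SS: "S l = S' l" for l
  proof
    show "S l \<subseteq> S' l"
    proof
      fix t assume "t \<in> S l"
      then have "(\<chi> i. if i = l then t else x0$i) \<in> T'" using upd1 TT by auto
      then have "(\<chi> i. if i = l then t else x0$i) $ l \<in> S' l" unfolding T'_def by blast
      then show "t \<in> S' l" by simp
    qed
  next
    show "S' l \<subseteq> S l"
    proof
      fix t assume "t \<in> S' l"
      have "x0 \<in> T'" using x0 TT by simp
      then have "(\<chi> i. if i = l then t else x0$i) \<in> T'" using \<open>t \<in> S' l\<close> unfolding T'_def by auto
      then have "(\<chi> i. if i = l then t else x0$i) $ l \<in> S l" using TT unfolding T_def by blast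
      then show "t \<in> S l" by simp
    qed
  qed
  have zero: "u l t = 0" if "t \<notin> S l" for l t
    using that closure_subset[of "{t. u l t \<noteq> 0}"] unfolding S_def fsupp_def by auto
  have zero': "u' l t = 0" if "t \<notin> S l" for l t
    using that closure_subset[of "{t. u' l t \<noteq> 0}"] unfolding SS S'_def fsupp_def by auto
  define R where "R x = exp (-(\<alpha> + (\<Sum>i\<in>UNIV. u i (x $ i))))" for x :: "real^'n"
  define R' where "R' x = exp (-(\<alpha>' + (\<Sum>i\<in>UNIV. u' i (x $ i))))" for x :: "real^'n"
  have KEY: "\<pi> + (1-\<pi>) * R x = \<pi>' + (1-\<pi>') * R' x" if xT: "x \<in> T" for x
  proof -
    let ?E = "exp (\<alpha> + (\<Sum>i\<in>UNIV. u i (x $ i)))"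
    let ?E' = "exp (\<alpha>' + (\<Sum>i\<in>UNIV. u' i (x $ i)))"
    define G where "G = gaet_g \<alpha> u h x"
    have Gp: "G > 0" using gT xT unfolding G_def by auto
    have G1: "G = ?E * h x" unfolding G_def gaet_g_def by simp
    have G2: "G = ?E' * h' x" using assms(4) unfolding G_def gaet_g_def by (metis)
    have F: "\<pi> * G + (1-\<pi>) * h x = \<pi>' * G + (1-\<pi>') * h' x"
      using assms(5) assms(4) unfolding G_def gaet_f_def by metis
    have r1: "R x = inverse ?E" unfolding R_def by (rule exp_minus)
    have r2: "R' x = inverse ?E'" unfolding R'_def by (rule exp_minus)
    have h1: "h x = G * R x" using G1 unfolding r1 by (simp add: field_simps)
    have h2: "h' x = G * R' x" using G2 unfolding r2 by (simp add: field_simps)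
    have "G * (\<pi> + (1-\<pi>) * R x) = G * (\<pi>' + (1-\<pi>') * R' x)"
      using F unfolding h1 h2 by (simp add: algebra_simps)
    then show ?thesis using Gp by simp
  qed
  define Q where "Q = (\<Sum>i\<in>UNIV-{j,k}. u i (x0$i))"
  define Q' where "Q' = (\<Sum>i\<in>UNIV-{j,k}. u' i (x0$i))"
  have Rst: "R (\<chi> i. if i = j then s else if i = k then t else x0$i) = exp (-(\<alpha>+Q)) * exp (- u j s) * exp (- u k t)" for s t
    unfolding R_def Q_def sum_upd2[OF jk] by (simp add: exp_add[symmetric] exp_minus[symmetric]) 
  have Rst': "R' (\<chi> i. if i = j then s else if i = k then t else x0$i) = exp (-(\<alpha>'+Q')) * exp (- u' j s) * exp (- u' k t)" for s t
    unfolding R'_def Q'_def sum_upd2[OF jk] by (simp add: exp_add[symmetric] exp_minus[symmetric])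
  have K4: "\<pi> + (1-\<pi>) * (exp (-(\<alpha>+Q)) * exp (- u j s) * exp (- u k t)) = \<pi>' + (1-\<pi>') * (exp (-(\<alpha>'+Q')) * exp (- u' j s) * exp (- u' k t))"
    if "s \<in> S j" "t \<in> S k" for s t
    using KEY[OF upd2[OF that]] unfolding Rst Rst' .
  have pp: "\<pi> = \<pi>'"
    by (rule alg[OF p1(2) _ _ _ K4[OF ab(1) ab'(1)] K4[OF ab(1) ab'(2)] K4[OF ab(2) ab'(1)] K4[OF ab(2) ab'(2)]])
       (use ab ab' in auto)
  have RR: "\<alpha> + (\<Sum>i\<in>UNIV. u i (x $ i)) = \<alpha>' + (\<Sum>i\<in>UNIV. u' i (x $ i))" if "x \<in> T" for x
  proof -
    have "R x = R' x" using KEY[OF that] pp p1 by simp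
    then show ?thesis unfolding R_def R'_def by simp
  qed
  have pos: "emeasure lborel (S l) \<noteq> 0" for l
  proof
    assume S0: "emeasure lborel (S l) = 0"
    have Sb: "S l \<in> sets borel" unfolding S_def fsupp_def by (rule borel_closed) simp
    have N0: "emeasure lborel {x::real^'n. x$l \<in> S l} = 0" by (rule null_coord[OF Sb S0])
    have mv: "(\<lambda>x::real^'n. x$l) \<in> borel_measurable lborel" by simp
    have "(\<lambda>x::real^'n. x$l) -` S l \<inter> space lborel \<in> sets lborel" by (rule measurable_sets[OF mv Sb])
    then have ms: "{x::real^'n. x$l \<in> S l} \<in> sets lborel" by (simp add: vimage_def)
    have "AE x in lborel. h x = 0"
    proof (rule AE_I')
      show "{x::real^'n. x$l \<in> S l} \<in> null_sets lborel" using N0 ms by (simp add: null_sets_def)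
      show "{x \<in> space lborel. \<not> h x = 0} \<subseteq> {x::real^'n. x$l \<in> S l}"
      proof
        fix x assume "x \<in> {x \<in> space lborel. \<not> h x = 0}"
        then have "0 < h x" using hnn[of x] by auto
        then have "x \<in> T" using hT by auto
        then show "x \<in> {x::real^'n. x$l \<in> S l}" unfolding T_def by auto
      qed
    qed
    then have "AE x in lborel. ennreal (h x) = 0" by eventually_elim simp
    then have "(\<integral>\<^sup>+ x. ennreal (h x) \<partial>lborel) = (\<integral>\<^sup>+ x. 0 \<partial>(lborel :: (real^'n) measure))"
      by (rule nn_integral_cong_AE)
    then show False using hint by simp
  qed
  have ueq: "u l = u' l" for l
  proof -
    define c where "c = u l (x0$l) - u' l (x0$l)"
    have onS: "u l t - u' l t = c" if "t \<in> S l" for t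
    proof -
      have "\<alpha> + (\<Sum>i\<in>UNIV. u i ((\<chi> i. if i = l then t else x0$i) $ i)) = \<alpha>' + (\<Sum>i\<in>UNIV. u' i ((\<chi> i. if i = l then t else x0$i) $ i))"
        by (rule RR[OF upd1[OF that]])
      then have e1: "\<alpha> + (u l t + (\<Sum>i\<in>UNIV-{l}. u i (x0$i))) = \<alpha>' + (u' l t + (\<Sum>i\<in>UNIV-{l}. u' i (x0$i)))"
        unfolding sum_upd1 .
      have "\<alpha> + (\<Sum>i\<in>UNIV. u i ((\<chi> i. if i = l then x0$l else x0$i) $ i)) = \<alpha>' + (\<Sum>i\<in>UNIV. u' i ((\<chi> i. if i = l then x0$l else x0$i) $ i))"
        by (rule RR[OF upd1]) (use x0 in \<open>auto simp: T_def\<close>)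
      then have e2: "\<alpha> + (u l (x0$l) + (\<Sum>i\<in>UNIV-{l}. u i (x0$i))) = \<alpha>' + (u' l (x0$l) + (\<Sum>i\<in>UNIV-{l}. u' i (x0$i)))"
        unfolding sum_upd1 .
      show ?thesis using e1 e2 unfolding c_def by linarith
    qed
    have funeq: "(\<lambda>t. u l t - u' l t) = (\<lambda>t. c * indicator (S l) t)"
    proof
      fix t show "u l t - u' l t = c * indicator (S l) t"
        by (cases "t \<in> S l") (auto simp: onS zero zero')
    qed
    have c0: "c = 0"
    proof (rule ccontr)
      assume cne: "c \<noteq> 0"
      have idf: "indicator (S l) = (\<lambda>t. (u l t - u' l t) / c)"
        using funeq cne by (auto simp: fun_eq_iff dest: fun_cong)
      have int: "integrable lborel (\<lambda>t. (u l t - u' l t) / c)" using ui ui' by auto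
      have "(\<integral>t. (u l t - u' l t) / c \<partial>lborel) = 0" using ui[of l] ui'[of l] by simp
      then have "(\<integral>t. indicator (S l) t \<partial>lborel) = (0::real)" unfolding idf .
      then have m0: "measure lborel (S l) = 0" by simp
      have "integrable lborel (indicator (S l) :: real \<Rightarrow> real)" unfolding idf using int .
      then have "emeasure lborel (S l) < \<infinity>" by (simp add: integrable_indicator_iff)
      then have "emeasure lborel (S l) = 0" using m0 by (simp add: emeasure_eq_ennreal_measure less_top)
      then show False using pos by blast
    qed
    show ?thesis
    proof
      fix t show "u l t = u' l t" using funeq c0 by (metis diff_eq_eq add.left_neutral mult_zero_left)
    qed
  qed
  have "\<alpha> = \<alpha>'" using RR[OF x0] ueq by simp
  then show ?thesis using pp ueq by simp
qed

end
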